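(* Let $N\ge 2$, $p\ge 2$, let $\Omega\subset\mathbb{R}^N$ be a radially symmetric domain and let $V\in C(\Omega)$ with $V\ge 0$ in $\Omega$. Let $u,v$ be radial functions of class $C^2$ in $\Omega$ such that $$0<v\le u\quad\text{in }\Omega$$ and $$u'\le v'<0\ \text{ in }\Omega\qquad\text{or}\qquad u'\ge v'>0\ \text{ in }\Omega .$$ If $u$ is a subsolution and $v$ is a supersolution of the equation $-\Delta_p w-V|w|^{p-2}w=0$ in $\Omega$, then $u-v$ is a subsolution of this equation in $\Omega$.
   Context: Here $\Delta_p w=\nabla\cdot(|\nabla w|^{p-2}\nabla w)$ is the $p$-Laplacian. Sub- and supersolutions are understood in the classical sense: a $C^2$ function $w$ on $\Omega$ is a subsolution (resp. supersolution) if $-\Delta_p w-V|w|^{p-2}w\le 0$ (resp. $\ge 0$) pointwise in $\Omega$. A radial function $w(x)=\phi(|x|)$ is identified with $\phi$, and $w'$ denotes $\phi'(r)$, the derivative with respect to $r=|x|$. A domain is a connected open set. *)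

theory Defs
  imports "HOL-Analysis.Analysis"
begin

text \<open>Points of R^N are vectors of type real^'n, N = CARD('n).\<close>


definition pd :: "'n::finite \<Rightarrow> (real^'n \<Rightarrow> real) \<Rightarrow> real^'n \<Rightarrow> real" where
  "pd i w x = frechet_derivative w (at x) (axis i 1)"

definition grad :: "(real^'n::finite \<Rightarrow> real) \<Rightarrow> real^'n \<Rightarrow> real^'n" where
  "grad w x = (\<chi> i. pd i w x)"

definition C2_on :: "(real^'n::finite) set \<Rightarrow> (real^'n \<Rightarrow> real) \<Rightarrow> bool" where
  "C2_on \<Omega> w \<longleftrightarrow> w differentiable_on \<Omega>
     \<and> (\<forall>i. (pd i w) differentiable_on \<Omega>)
     \<and> (\<forall>i j. continuous_on \<Omega> (pd j (pd i w)))"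

definition p_laplacian :: "real \<Rightarrow> (real^'n::finite \<Rightarrow> real) \<Rightarrow> real^'n \<Rightarrow> real" where
  "p_laplacian p w x = (\<Sum>i\<in>UNIV. pd i (\<lambda>y. norm (grad w y) powr (p - 2) * grad w y $ i) x)"

definition radially_symmetric_domain :: "(real^'n::finite) set \<Rightarrow> bool" where
  "radially_symmetric_domain \<Omega> \<longleftrightarrow> open \<Omega> \<and> connected \<Omega> \<and>
     (\<forall>x\<in>\<Omega>. \<forall>y. norm y = norm x \<longrightarrow> y \<in> \<Omega>)"

definition radial_on :: "(real^'n::finite) set \<Rightarrow> (real^'n \<Rightarrow> real) \<Rightarrow> bool" where
  "radial_on \<Omega> w \<longleftrightarrow> (\<forall>x\<in>\<Omega>. \<forall>y\<in>\<Omega>. norm x = norm y \<longrightarrow> w x = w y)"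

text \<open>Radial derivative w'(|x|) = grad w(x) . x/|x| (derivative in r).\<close>
definition rad_deriv :: "(real^'n::finite \<Rightarrow> real) \<Rightarrow> real^'n \<Rightarrow> real" where
  "rad_deriv w x = grad w x \<bullet> (x /\<^sub>R norm x)"

definition subsolution :: "real \<Rightarrow> (real^'n::finite \<Rightarrow> real) \<Rightarrow> (real^'n) set \<Rightarrow> (real^'n \<Rightarrow> real) \<Rightarrow> bool" where
  "subsolution p V \<Omega> w \<longleftrightarrow> C2_on \<Omega> w \<and>
     (\<forall>x\<in>\<Omega>. - p_laplacian p w x - V x * \<bar>w x\<bar> powr (p - 2) * w x \<le> 0)"

definition supersolution :: "real \<Rightarrow> (real^'n::finite \<Rightarrow> real) \<Rightarrow> (real^'n) set \<Rightarrow> (real^'n \<Rightarrow> real) \<Rightarrow> bool" where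
  "supersolution p V \<Omega> w \<longleftrightarrow> C2_on \<Omega> w \<and>
     (\<forall>x\<in>\<Omega>. - p_laplacian p w x - V x * \<bar>w x\<bar> powr (p - 2) * w x \<ge> 0)"

end

theory Submission
  imports Defs
begin

lemma pd_eq: "(f has_derivative f') (at x) \<Longrightarrow> pd i f x = f' (axis i 1)"
  unfolding pd_def using frechet_derivative_at by metis

lemma lin_expand:
  fixes f :: "real^'n::finite \<Rightarrow> real"
  assumes "linear f"
  shows "f x = (\<Sum>i\<in>UNIV. x$i * f (axis i 1))"
proof -
  have "f x = f (\<Sum>i\<in>UNIV. x$i *\<^sub>R axis i 1)"
    using basis_expansion[of x] by (simp add: scalar_mult_eq_scaleR)
  also have "\<dots> = (\<Sum>i\<in>UNIV. x$i * f (axis i 1))"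
    using assms by (simp add: linear_sum linear_scale)
  finally show ?thesis .
qed

lemma grad_deriv:
  assumes "w differentiable (at x)"
  shows "(w has_derivative (\<lambda>h. grad w x \<bullet> h)) (at x)"
proof -
  let ?D = "frechet_derivative w (at x)"
  have d: "(w has_derivative ?D) (at x)" using assms frechet_derivative_works by blast
  have "linear ?D" using d has_derivative_linear by blast
  then have "?D h = grad w x \<bullet> h" for h
    by (subst lin_expand[of ?D]) (auto simp: grad_def pd_def inner_vec_def mult.commute)
  then have "?D = (\<lambda>h. grad w x \<bullet> h)" by auto
  then show ?thesis using d by simp
qed


lemma radial_grad:
  fixes w :: "real^'n::finite \<Rightarrow> real"
  assumes sph: "\<forall>x\<in>\<Omega>. \<forall>y. norm y = norm x \<longrightarrow> y \<in> \<Omega>"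
    and rad: "radial_on \<Omega> w" and x: "x \<in> \<Omega>" "x \<noteq> 0" and dw: "w differentiable (at x)"
  shows "grad w x = rad_deriv w x *\<^sub>R (x /\<^sub>R norm x)"
proof -
  have D: "(w has_derivative (\<lambda>h. grad w x \<bullet> h)) (at x)" using grad_deriv dw by blast
  have orth: "grad w x \<bullet> y = 0" if xy: "x \<bullet> y = 0" for y
  proof (cases "y = 0")
    case True then show ?thesis by simp
  next
    case False
    define k where "k = norm x / norm y"
    have k0: "k \<noteq> 0" using False x by (simp add: k_def)
    define c where "c t = cos t *\<^sub>R x + (sin t * k) *\<^sub>R y" for t
    have cD: "(c has_derivative (\<lambda>h. h *\<^sub>R (k *\<^sub>R y))) (at 0)"
      unfolding c_def by (auto intro!: derivative_eq_intros)
    have c0: "c 0 = x" by (simp add: c_def)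
    have nc: "norm (c t) = norm x" for t
    proof -
      have "(norm (c t))^2 = (cos t)^2 * (norm x)^2 + (sin t * k)^2 * (norm y)^2"
        unfolding c_def power2_norm_eq_inner
        by (simp add: inner_add_left inner_add_right xy inner_commute[of y x] power2_eq_square algebra_simps)
      also have "\<dots> = (norm x)^2"
        using False by (simp add: k_def power_mult_distrib power_divide flip: distrib_right)
      finally show ?thesis by (simp add: power2_eq_iff_nonneg)
    qed
    have wc: "w (c t) = w x" for t
      using rad x sph nc unfolding radial_on_def by metis
    have "((\<lambda>t. w (c t)) has_derivative (\<lambda>h. grad w x \<bullet> (h *\<^sub>R (k *\<^sub>R y)))) (at 0)"
      using diff_chain_at[OF cD, of w "\<lambda>h. grad w x \<bullet> h"] D c0 by (simp add: o_def)
    moreover have "((\<lambda>t. w (c t)) has_derivative (\<lambda>h. 0)) (at 0)"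
      using wc by simp
    ultimately have "(\<lambda>h. grad w x \<bullet> (h *\<^sub>R (k *\<^sub>R y))) = (\<lambda>h. 0)"
      using has_derivative_unique by blast
    then have "grad w x \<bullet> (1 *\<^sub>R (k *\<^sub>R y)) = 0" by metis
    then show ?thesis using k0 by simp
  qed
  define z where "z = grad w x - ((grad w x \<bullet> x) / (x \<bullet> x)) *\<^sub>R x"
  have "x \<bullet> z = 0" using x by (simp add: z_def inner_diff_right inner_commute)
  then have "grad w x \<bullet> z = 0" by (rule orth)
  then have "z \<bullet> z = 0" using \<open>x \<bullet> z = 0\<close>
    by (simp add: z_def inner_diff_left inner_commute)
  then have "grad w x = ((grad w x \<bullet> x) / (x \<bullet> x)) *\<^sub>R x" by (simp add: z_def)
  then show ?thesis using x
    by (simp add: rad_deriv_def dot_square_norm power2_eq_square field_simps)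
qed


definition Gp :: "real \<Rightarrow> real \<Rightarrow> real" where "Gp p t = \<bar>t\<bar> powr (p-2) * t"
definition Gd :: "real \<Rightarrow> real \<Rightarrow> real" where
  "Gd p t = (if p = 2 then 1 else (p-1) * \<bar>t\<bar> powr (p-2))"

lemma G_deriv:
  assumes p: "p \<ge> 2"
  shows "(Gp p has_real_derivative Gd p t) (at t)"
proof (cases "p = 2")
  case True
  then have "Gp p = (\<lambda>y. y)" by (auto simp: Gp_def fun_eq_iff)
  then show ?thesis using True by (simp add: Gd_def)
next
  case False
  then have p2: "p > 2" using p by simp
  consider "t > 0" | "t < 0" | "t = 0" by linarith
  then show ?thesis
  proof cases
    case 1
    have "((\<lambda>y. y powr (p-1)) has_real_derivative (p-1) * t powr (p-1-1)) (at t)"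
      using has_real_derivative_powr 1 by blast
    moreover have "y \<in> {0<..} \<Longrightarrow> y powr (p-1) = Gp p y" for y
      by (simp add: Gp_def powr_diff power2_eq_square)
    ultimately have "(Gp p has_real_derivative (p-1) * t powr (p-1-1)) (at t)"
      using has_field_derivative_transform_within_open[of _ _ t "{0<..}"] 1 by auto
    then show ?thesis using 1 False by (simp add: Gd_def)
  next
    case 2
    have "((\<lambda>y. - ((- y) powr (p-1))) has_real_derivative (p-1) * (-t) powr (p-1-1)) (at t)"
      using 2 by (auto intro!: derivative_eq_intros)
    moreover have "y \<in> {..<0} \<Longrightarrow> - ((- y) powr (p-1)) = Gp p y" for y
      by (simp add: Gp_def powr_diff power2_eq_square)
    ultimately have "(Gp p has_real_derivative (p-1) * (-t) powr (p-1-1)) (at t)"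
      using has_field_derivative_transform_within_open[of _ _ t "{..<0}"] 2 by auto
    then show ?thesis using 2 False by (simp add: Gd_def)
  next
    case 3
    have "((\<lambda>y. \<bar>y\<bar> powr (p-2)) \<longlongrightarrow> 0) (at 0)"
      by (rule tendsto_zero_powrI) (use p2 in \<open>auto intro!: tendsto_eq_intros\<close>)
    moreover have "\<forall>\<^sub>F y in at 0. \<bar>y\<bar> powr (p-2) = (Gp p y - Gp p 0) / (y - 0)"
      by (auto simp: Gp_def eventually_at_filter)
    ultimately have "((\<lambda>y. (Gp p y - Gp p 0) / (y - 0)) \<longlongrightarrow> 0) (at 0)"
      using tendsto_cong by force
    then show ?thesis using 3 False p2 by (simp add: Gd_def has_field_derivative_iff)
  qed
qed


lemma lap_formula:
  fixes w :: "real^'n::finite \<Rightarrow> real"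
  assumes op: "open \<Omega>" and sph: "\<forall>x\<in>\<Omega>. \<forall>y. norm y = norm x \<longrightarrow> y \<in> \<Omega>"
    and nz: "0 \<notin> \<Omega>" and rad: "radial_on \<Omega> w" and dw: "w differentiable_on \<Omega>"
    and x: "x \<in> \<Omega>" and p: "p \<ge> 2"
    and D: "(rad_deriv w has_derivative D) (at x)"
  shows "p_laplacian p w x =
     (Gd p (rad_deriv w x) * D x + (real CARD('n) - 1) * Gp p (rad_deriv w x)) / norm x"
proof -
  define \<phi> where "\<phi> = rad_deriv w"
  have x0: "x \<noteq> 0" using x nz by auto
  have gr: "grad w y = \<phi> y *\<^sub>R (y /\<^sub>R norm y)" if "y \<in> \<Omega>" for y
  proof -
    have "w differentiable (at y)"
      using dw op that by (simp add: differentiable_on_eq_differentiable_at)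
    then show ?thesis using radial_grad[OF sph rad that] that nz \<phi>_def by auto
  qed
  have Fi: "norm (grad w y) powr (p - 2) * grad w y $ i = Gp p (\<phi> y) / norm y * y $ i"
    if "y \<in> \<Omega>" for y i
  proof -
    have y0: "y \<noteq> 0" using that nz by auto
    have "norm (grad w y) = \<bar>\<phi> y\<bar>" using gr[OF that] y0 by (simp add: abs_mult)
    then show ?thesis using gr[OF that] by (simp add: Gp_def field_simps)
  qed
  have GD: "((\<lambda>y. Gp p (\<phi> y)) has_derivative (\<lambda>h. D h * Gd p (\<phi> x))) (at x)"
    using DERIV_compose_FDERIV[OF G_deriv[OF p] D[folded \<phi>_def]] .
  have N: "(norm has_derivative (\<lambda>h. h \<bullet> sgn x)) (at x)" using has_derivative_norm[OF x0] by simp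
  have K: "((\<lambda>y. Gp p (\<phi> y) / norm y) has_derivative
     (\<lambda>h. (D h * Gd p (\<phi> x) * norm x - Gp p (\<phi> x) * (h \<bullet> sgn x)) / (norm x * norm x))) (at x)"
    using has_derivative_divide'[OF GD N] x0 by simp
  have C: "((\<lambda>y. y $ i) has_derivative (\<lambda>h. h $ i)) (at x)" for i
    using bounded_linear.has_derivative[OF bounded_linear_vec_nth has_derivative_id] by simp
  have kD: "((\<lambda>y. Gp p (\<phi> y) / norm y * y $ i) has_derivative
     (\<lambda>h. (D h * Gd p (\<phi> x) * norm x - Gp p (\<phi> x) * (h \<bullet> sgn x)) / (norm x * norm x) * x $ i
          + Gp p (\<phi> x) / norm x * h $ i)) (at x)" for i
    using has_derivative_mult[OF K C] by (simp add: algebra_simps)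
  define Gx where "Gx = Gd p (\<phi> x)"
  define Px where "Px = Gp p (\<phi> x)"
  define r where "r = norm x"
  have r0: "r > 0" using x0 by (simp add: r_def)
  have pdi: "pd i (\<lambda>y. norm (grad w y) powr (p - 2) * grad w y $ i) x
     = Gx / r * (x $ i * D (axis i 1)) - Px / (r*r*r) * (x $ i * x $ i) + Px / r" for i
  proof -
    have "((\<lambda>y. norm (grad w y) powr (p - 2) * grad w y $ i) has_derivative
     (\<lambda>h. (D h * Gd p (\<phi> x) * norm x - Gp p (\<phi> x) * (h \<bullet> sgn x)) / (norm x * norm x) * x $ i
          + Gp p (\<phi> x) / norm x * h $ i)) (at x)"
      by (rule has_derivative_transform_within_open[OF kD op x]) (simp add: Fi)
    then have "pd i (\<lambda>y. norm (grad w y) powr (p - 2) * grad w y $ i) x =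
      (D (axis i 1) * Gx * r - Px * (axis i 1 \<bullet> sgn x)) / (r * r) * x $ i + Px / r * (axis i 1) $ i"
      by (simp add: pd_eq Gx_def Px_def r_def)
    also have "axis i 1 \<bullet> sgn x = x $ i / r"
      by (simp add: inner_commute inner_axis sgn_div_norm r_def divide_inverse mult.commute)
    finally show ?thesis using r0 by (simp add: field_simps)
  qed
  have lin: "linear D" using D has_derivative_linear by blast
  have "p_laplacian p w x = (\<Sum>i\<in>UNIV. Gx / r * (x $ i * D (axis i 1)) - Px / (r*r*r) * (x $ i * x $ i) + Px / r)"
    unfolding p_laplacian_def using pdi by simp
  also have "\<dots> = Gx / r * (\<Sum>i\<in>UNIV. x $ i * D (axis i 1)) - Px / (r*r*r) * (\<Sum>i\<in>UNIV. x $ i * x $ i) + real CARD('n) * (Px / r)"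
    by (simp add: sum.distrib sum_subtractf sum_distrib_left)
  also have "(\<Sum>i\<in>UNIV. x $ i * D (axis i 1)) = D x" by (rule lin_expand[OF lin, symmetric])
  also have "(\<Sum>i\<in>UNIV. x $ i * x $ i) = r * r"
  proof -
    have "(\<Sum>i\<in>UNIV. x $ i * x $ i) = x \<bullet> x" by (simp add: inner_vec_def)
    also have "\<dots> = r * r" by (simp add: r_def dot_square_norm power2_eq_square)
    finally show ?thesis .
  qed
  finally have "p_laplacian p w x = Gx / r * D x - Px / (r * r * r) * (r * r) + real CARD('n) * (Px / r)" .
  also have "\<dots> = (Gx * D x + (real CARD('n) - 1) * Px) / r"
    using r0 by (simp add: field_simps)
  finally show ?thesis by (simp add: Gx_def Px_def \<phi>_def r_def)
qed

lemma key_ineq: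
  fixes s A B u v :: real
  assumes s: "s \<ge> 1" and B: "B > 0" and AB: "A > B" and v: "v > 0" and uv: "u \<ge> v"
  shows "(A - B) powr (s-1) * (u powr s / A powr (s-1) - v powr s / B powr (s-1)) \<le> (u - v) powr s"
proof (cases "u = v")
  case True
  have "A powr (s-1) \<ge> B powr (s-1)" using AB B s by (intro powr_mono2) auto
  then have "u powr s / A powr (s-1) \<le> v powr s / B powr (s-1)"
    using True B AB v by (simp add: divide_left_mono)
  then show ?thesis using True AB
    by (simp add: mult_nonneg_nonpos)
next
  case False
  define C where "C = A - B"
  have C: "C > 0" using AB by (simp add: C_def)
  have A: "A > 0" using AB B by simp
  have uv': "u - v > 0" using False uv by simp
  have cv: "convex_on {0<..} (\<lambda>x::real. x powr s)" using powr_convex s by blast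
  define t where "t = C / A"
  have t0: "t \<ge> 0" "t \<le> 1" using C A AB B by (auto simp: t_def C_def)
  have "((1 - t) *\<^sub>R (v / B) + t *\<^sub>R ((u - v) / C)) powr s
        \<le> (1 - t) * (v / B) powr s + t * ((u - v) / C) powr s"
    using convex_onD[OF cv t0, of "v / B" "(u - v) / C"] v B uv' C by simp
  moreover have "(1 - t) *\<^sub>R (v / B) + t *\<^sub>R ((u - v) / C) = u / A"
    using A B C by (simp add: t_def C_def field_simps)
  moreover have "1 - t = B / A" using A by (simp add: t_def C_def field_simps)
  ultimately have ineq: "(u / A) powr s \<le> B / A * (v / B) powr s + C / A * ((u - v) / C) powr s"
    by (simp add: t_def)
  have pw: "x powr s = x powr (s-1) * x" if "x > 0" for x :: real
    using that by (simp add: powr_diff)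
  have "u powr s / A powr (s-1) = A * (u / A) powr s"
    using A v uv by (simp add: powr_divide pw[OF A] field_simps)
  also have "\<dots> \<le> A * (B / A * (v / B) powr s + C / A * ((u - v) / C) powr s)"
    using ineq A by simp
  also have "\<dots> = v powr s / B powr (s-1) + (u - v) powr s / C powr (s-1)"
    using A B C v uv' by (simp add: powr_divide pw[OF B] pw[OF C] field_simps)
  finally have "u powr s / A powr (s-1) - v powr s / B powr (s-1) \<le> (u - v) powr s / C powr (s-1)"
    by simp
  then have "C powr (s-1) * (u powr s / A powr (s-1) - v powr s / B powr (s-1))
      \<le> C powr (s-1) * ((u - v) powr s / C powr (s-1))"
    using C by (intro mult_left_mono) auto
  then show ?thesis using C by (simp add: C_def)
qed


lemma pow_id: "u \<ge> 0 \<Longrightarrow> \<bar>u\<bar> powr (p - 2) * u = u powr (p - 1)" for u p :: real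
  by (cases "u = 0") (auto simp: powr_diff power2_eq_square)

lemma Gd_nz: "a \<noteq> 0 \<Longrightarrow> p \<ge> 2 \<Longrightarrow> Gd p a = (p - 1) * \<bar>a\<bar> powr (p - 2)"
  by (auto simp: Gd_def)

lemma alg:
  fixes a b Du Dv M r V u v p :: real
  assumes p: "p \<ge> 2" and r: "r > 0" and V: "V \<ge> 0" and v: "v > 0" and uv: "v \<le> u"
    and ab: "(a \<le> b \<and> b < 0) \<or> (b \<le> a \<and> b > 0)"
    and hu: "- ((Gd p a * Du + M * Gp p a) / r) - V * \<bar>u\<bar> powr (p - 2) * u \<le> 0"
    and hv: "- ((Gd p b * Dv + M * Gp p b) / r) - V * \<bar>v\<bar> powr (p - 2) * v \<ge> 0"
  shows "- ((Gd p (a - b) * (Du - Dv) + M * Gp p (a - b)) / r) - V * \<bar>u - v\<bar> powr (p - 2) * (u - v) \<le> 0"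
proof -
  define s where "s = p - 1"
  have s: "s \<ge> 1" using p by (simp add: s_def)
  have e: "p - 2 = s - 1" by (simp add: s_def)
  define A B C where "A = \<bar>a\<bar>" and "B = \<bar>b\<bar>" and "C = \<bar>a - b\<bar>"
  have B0: "B > 0" and AB: "A \<ge> B" and CAB: "C = A - B" using ab by (auto simp: A_def B_def C_def)
  have a0: "a \<noteq> 0" and b0: "b \<noteq> 0" using ab by auto
  define Lu Lv where "Lu = Gd p a * Du + M * Gp p a" and "Lv = Gd p b * Dv + M * Gp p b"
  have hu': "- (Lu / r) \<le> V * u powr s" using hu pow_id[of u p] v uv by (simp add: Lu_def s_def mult.assoc)
  have hv': "- (Lv / r) \<ge> V * v powr s" using hv pow_id[of v p] v by (simp add: Lv_def s_def mult.assoc)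
  have goalV: "V * \<bar>u - v\<bar> powr (p - 2) * (u - v) = V * (u - v) powr s"
    using pow_id[of "u - v" p] uv by (simp add: s_def mult.assoc)
  show ?thesis
  proof (cases "a = b")
    case True
    show ?thesis
    proof (cases "p = 2")
      case True
      have "Du - Dv = Lu - Lv" using \<open>a = b\<close> True by (simp add: Lu_def Lv_def Gd_def)
      moreover have "Gp p (a - b) = 0" using \<open>a = b\<close> by (simp add: Gp_def)
      moreover have "u powr s - v powr s = (u - v) powr s" using True v uv by (simp add: s_def)
      ultimately have eqs: "Du - Dv = Lu - Lv" "Gp p (a - b) = 0" "u powr s - v powr s = (u - v) powr s"
        by auto
      have "- ((Du - Dv) / r) = - (Lu / r) - (- (Lv / r))" using eqs by (simp add: diff_divide_distrib)
      also have "\<dots> \<le> V * u powr s - V * v powr s" using hu' hv' by linarith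
      also have "\<dots> = V * (u - v) powr s" using eqs(3) by (simp flip: right_diff_distrib)
      finally have "- ((Du - Dv) / r) \<le> V * (u - v) powr s" .
      moreover have "Gd p (a - b) = 1" using True by (simp add: Gd_def)
      ultimately show ?thesis unfolding goalV eqs(1,2) by simp
    next
      case False
      then have "Gd p (a - b) = 0" "Gp p (a - b) = 0" using \<open>a = b\<close> p by (auto simp: Gd_def Gp_def)
      moreover have "V * (u - v) powr s \<ge> 0" using V by simp
      ultimately show ?thesis unfolding goalV by simp
    qed
  next
    case False
    have C0: "C > 0" using False by (simp add: C_def)
    define PA PB PC where "PA = A powr (s-1)" and "PB = B powr (s-1)" and "PC = C powr (s-1)"
    have PA: "PA > 0" and PB: "PB > 0" and PC: "PC > 0" using B0 AB C0 by (auto simp: PA_def PB_def PC_def)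
    have Gda: "Gd p a = s * PA" and Gdb: "Gd p b = s * PB" and Gdc: "Gd p (a - b) = s * PC"
      using a0 b0 False p by (auto simp: Gd_nz PA_def PB_def PC_def A_def B_def C_def s_def)
    have Gpa: "Gp p a = PA * a" and Gpb: "Gp p b = PB * b" and Gpc: "Gp p (a - b) = PC * (a - b)"
      by (auto simp: Gp_def PA_def PB_def PC_def A_def B_def C_def e)
    have Du: "Du = (Lu - M * PA * a) / (s * PA)" using PA s by (simp add: Lu_def Gda Gpa field_simps)
    have Dv: "Dv = (Lv - M * PB * b) / (s * PB)" using PB s by (simp add: Lv_def Gdb Gpb field_simps)
    have Lc: "Gd p (a - b) * (Du - Dv) + M * Gp p (a - b) = PC * (Lu / PA - Lv / PB)"
      unfolding Gdc Gpc Du Dv using PA PB s by (simp add: field_simps)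
    have "- ((Gd p (a - b) * (Du - Dv) + M * Gp p (a - b)) / r) = PC * ((- (Lu / r)) / PA - (- (Lv / r)) / PB)"
      unfolding Lc using r by (simp add: field_simps)
    also have "\<dots> \<le> PC * ((V * u powr s) / PA - (V * v powr s) / PB)"
      using hu' hv' PA PB PC by (intro mult_left_mono diff_mono divide_right_mono) auto
    also have "\<dots> = V * (PC * (u powr s / PA - v powr s / PB))" by (simp add: algebra_simps)
    also have "\<dots> \<le> V * (u - v) powr s"
    proof (rule mult_left_mono[OF _ V])
      have "A > B" using CAB C0 by simp
      then show "PC * (u powr s / PA - v powr s / PB) \<le> (u - v) powr s"
        using key_ineq[OF s B0 _ v uv] CAB by (simp add: PA_def PB_def PC_def)
    qed
    finally show ?thesis unfolding goalV by simp
  qed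
qed


lemma pd_diff:
  assumes "u differentiable (at y)" "v differentiable (at y)"
  shows "pd i (\<lambda>x. u x - v x) y = pd i u y - pd i v y"
proof -
  have "((\<lambda>x. u x - v x) has_derivative (\<lambda>h. frechet_derivative u (at y) h - frechet_derivative v (at y) h)) (at y)"
    using assms frechet_derivative_works has_derivative_diff by blast
  then have "pd i (\<lambda>x. u x - v x) y = frechet_derivative u (at y) (axis i 1) - frechet_derivative v (at y) (axis i 1)"
    by (rule pd_eq)
  then show ?thesis by (simp add: pd_def)
qed

lemma diff_on_transform:
  assumes "open S" "f differentiable_on S" "\<And>y. y \<in> S \<Longrightarrow> g y = f y"
  shows "g differentiable_on S"
proof -
  have "g differentiable (at y)" if "y \<in> S" for y
  proof -
    from assms that obtain D where "(f has_derivative D) (at y)"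
      by (auto simp: differentiable_on_eq_differentiable_at differentiable_def)
    then have "(g has_derivative D) (at y)"
      by (rule has_derivative_transform_within_open[OF _ assms(1) that]) (simp add: assms(3))
    then show ?thesis by (auto simp: differentiable_def)
  qed
  then show ?thesis using assms(1) by (simp add: differentiable_on_eq_differentiable_at)
qed

lemma rad_deriv_sum: "rad_deriv w y = (\<Sum>i\<in>UNIV. pd i w y * y $ i) / norm y"
  by (simp add: rad_deriv_def grad_def inner_vec_def sum_divide_distrib field_simps)

lemma rad_deriv_differentiable:
  fixes w :: "real^'n::finite \<Rightarrow> real"
  assumes "\<And>i. pd i w differentiable (at x)" "x \<noteq> 0"
  shows "rad_deriv w differentiable (at x)"
proof -
  have c: "(\<lambda>y. y $ i) differentiable (at x)" for i :: 'n
    by (rule bounded_linear_imp_differentiable) (rule bounded_linear_vec_nth)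
  have "(\<lambda>y. (\<Sum>i\<in>UNIV. pd i w y * y $ i) / norm y) differentiable (at x)"
    using assms c by (intro differentiable_divide differentiable_sum differentiable_mult differentiable_norm_at) auto
  then show ?thesis by (simp add: rad_deriv_sum[abs_def])
qed


theorem theorem2p2:
  fixes \<Omega> :: "(real^'n::finite) set" and V u v :: "real^'n \<Rightarrow> real" and p :: real
  assumes "CARD('n) \<ge> 2" and "p \<ge> 2"
    and "radially_symmetric_domain \<Omega>"
    and "continuous_on \<Omega> V" and "\<forall>x\<in>\<Omega>. V x \<ge> 0"
    and "radial_on \<Omega> u" and "radial_on \<Omega> v"
    and "C2_on \<Omega> u" and "C2_on \<Omega> v"
    and "\<forall>x\<in>\<Omega>. 0 < v x \<and> v x \<le> u x"
    and "(\<forall>x\<in>\<Omega>. rad_deriv u x \<le> rad_deriv v x \<and> rad_deriv v x < 0)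
       \<or> (\<forall>x\<in>\<Omega>. rad_deriv u x \<ge> rad_deriv v x \<and> rad_deriv v x > 0)"
    and "subsolution p V \<Omega> u" and "supersolution p V \<Omega> v"
  shows "subsolution p V \<Omega> (\<lambda>x. u x - v x)"
proof -
  note p = assms(2)
  have op: "open \<Omega>" and sph: "\<forall>x\<in>\<Omega>. \<forall>y. norm y = norm x \<longrightarrow> y \<in> \<Omega>"
    using assms(3) by (auto simp: radially_symmetric_domain_def)
  have nz: "0 \<notin> \<Omega>"
  proof
    assume "0 \<in> \<Omega>"
    moreover have "rad_deriv v 0 = 0" by (simp add: rad_deriv_def)
    ultimately show False using assms(11) by force
  qed
  have du: "u differentiable (at y)" and dv: "v differentiable (at y)" if "y \<in> \<Omega>" for y
    using assms(8,9) op that by (auto simp: C2_on_def differentiable_on_eq_differentiable_at)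
  have dpu: "pd i u differentiable (at y)" and dpv: "pd i v differentiable (at y)" if "y \<in> \<Omega>" for y i
    using assms(8,9) op that by (auto simp: C2_on_def differentiable_on_eq_differentiable_at)
  have pdw: "pd i (\<lambda>x. u x - v x) y = pd i u y - pd i v y" if "y \<in> \<Omega>" for y i
    using pd_diff[OF du[OF that] dv[OF that]] .
  have dw: "(\<lambda>x. u x - v x) differentiable_on \<Omega>"
    using assms(8,9) by (auto simp: C2_on_def intro: differentiable_on_diff)
  have dpw_on: "pd i (\<lambda>x. u x - v x) differentiable_on \<Omega>" for i
  proof (rule diff_on_transform[OF op _ pdw])
    show "(\<lambda>y. pd i u y - pd i v y) differentiable_on \<Omega>"
      using assms(8,9) by (auto simp: C2_on_def intro: differentiable_on_diff)
  qed
  have dpw: "pd i (\<lambda>x. u x - v x) differentiable (at y)" if "y \<in> \<Omega>" for y i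
    using dpw_on op that by (simp add: differentiable_on_eq_differentiable_at)
  have cont: "continuous_on \<Omega> (pd j (pd i (\<lambda>x. u x - v x)))" for i j
  proof -
    have "pd j (pd i (\<lambda>x. u x - v x)) y = pd j (pd i u) y - pd j (pd i v) y" if "y \<in> \<Omega>" for y
    proof -
      have "pd j (pd i (\<lambda>x. u x - v x)) y = pd j (\<lambda>x. pd i u x - pd i v x) y"
        unfolding pd_def[of j "pd i (\<lambda>x. u x - v x)" y] pd_def[of j "\<lambda>x. pd i u x - pd i v x" y]
        by (rule arg_cong[where f="\<lambda>D. D (axis j 1)"], rule frechet_derivative_transform_within_open[OF dpw[OF that] op that]) (simp add: pdw)
      also have "\<dots> = pd j (pd i u) y - pd j (pd i v) y"
        by (rule pd_diff[OF dpu[OF that] dpv[OF that]])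
      finally show ?thesis .
    qed
    moreover have "continuous_on \<Omega> (\<lambda>y. pd j (pd i u) y - pd j (pd i v) y)"
      using assms(8,9) by (intro continuous_on_diff) (auto simp: C2_on_def)
    ultimately show ?thesis using continuous_on_cong by force
  qed
  have C2: "C2_on \<Omega> (\<lambda>x. u x - v x)"
    unfolding C2_on_def using dw dpw_on cont by blast
  have ineq: "- p_laplacian p (\<lambda>x. u x - v x) x - V x * \<bar>u x - v x\<bar> powr (p - 2) * (u x - v x) \<le> 0"
    if x: "x \<in> \<Omega>" for x
  proof -
    have x0: "x \<noteq> 0" using x nz by auto
    obtain Du where Du: "(rad_deriv u has_derivative Du) (at x)"
      using rad_deriv_differentiable[OF dpu[OF x] x0] by (auto simp: differentiable_def)
    obtain Dv where Dv: "(rad_deriv v has_derivative Dv) (at x)"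
      using rad_deriv_differentiable[OF dpv[OF x] x0] by (auto simp: differentiable_def)
    have rw: "rad_deriv (\<lambda>x. u x - v x) y = rad_deriv u y - rad_deriv v y" if "y \<in> \<Omega>" for y
    proof -
      have "(\<Sum>i\<in>UNIV. pd i (\<lambda>x. u x - v x) y * y $ i) = (\<Sum>i\<in>UNIV. pd i u y * y $ i - pd i v y * y $ i)"
        using pdw[OF that] by (intro sum.cong) (auto simp: left_diff_distrib)
      also have "\<dots> = (\<Sum>i\<in>UNIV. pd i u y * y $ i) - (\<Sum>i\<in>UNIV. pd i v y * y $ i)"
        by (rule sum_subtractf)
      finally show ?thesis unfolding rad_deriv_sum by (simp add: diff_divide_distrib)
    qed
    have Dw: "(rad_deriv (\<lambda>x. u x - v x) has_derivative (\<lambda>h. Du h - Dv h)) (at x)"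
      using has_derivative_transform_within_open[OF has_derivative_diff[OF Du Dv] op x, of "rad_deriv (\<lambda>x. u x - v x)"]
        rw by presburger
    have radw: "radial_on \<Omega> (\<lambda>x. u x - v x)"
      unfolding radial_on_def
    proof (intro ballI impI)
      fix a b assume ab: "a \<in> \<Omega>" "b \<in> \<Omega>" "norm a = norm b"
      then have "u a = u b" "v a = v b" using assms(6,7) unfolding radial_on_def by blast+
      then show "u a - v a = u b - v b" by simp
    qed
    note Lu = lap_formula[OF op sph nz assms(6) _ x p Du]
    note Lv = lap_formula[OF op sph nz assms(7) _ x p Dv]
    note Lw = lap_formula[OF op sph nz radw dw x p Dw]
    have dun: "u differentiable_on \<Omega>" "v differentiable_on \<Omega>" using assms(8,9) by (auto simp: C2_on_def)
    have hu: "- p_laplacian p u x - V x * \<bar>u x\<bar> powr (p - 2) * u x \<le> 0"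
      using assms(12) x by (auto simp: subsolution_def)
    have hv: "- p_laplacian p v x - V x * \<bar>v x\<bar> powr (p - 2) * v x \<ge> 0"
      using assms(13) x by (auto simp: supersolution_def)
    have ab: "(rad_deriv u x \<le> rad_deriv v x \<and> rad_deriv v x < 0) \<or> (rad_deriv v x \<le> rad_deriv u x \<and> rad_deriv v x > 0)"
      using assms(11) x by auto
    have "- ((Gd p (rad_deriv u x - rad_deriv v x) * (Du x - Dv x) + (real CARD('n) - 1) * Gp p (rad_deriv u x - rad_deriv v x)) / norm x)
          - V x * \<bar>u x - v x\<bar> powr (p - 2) * (u x - v x) \<le> 0"
      apply (rule alg[OF p _ _ _ _ ab])
      using x0 assms(5,10) x hu hv Lu[OF dun(1)] Lv[OF dun(2)] by auto
    then show ?thesis using Lw rw[OF x] by simp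
  qed
  show ?thesis unfolding subsolution_def using C2 ineq by blast
qed

end
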